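(* Let $0<\gamma<1/3$. There are positive constants $c_1=c_1(\gamma)$ and $c_2=c_2(\gamma)$ such that for $\pi(N)(1+o(1))$ primes $p\le N$ (as $N\to\infty$) we have $$c_1N^{\gamma/2}\le\frac{1}{p}\sum_{x=0}^{p-1}\left|\sum_{n\le N^{\gamma}}e^{2\pi i\frac{x}{p}F_n}\right|\le c_2N^{\gamma/2}.$$
   Context: $\{F_n\}$ is the Fibonacci sequence: $F_1=F_2=1$, $F_{n+2}=F_{n+1}+F_n$ for $n\ge1$. $\pi(N)$ denotes the number of primes $p\le N$. *)

theory Defs
  imports "HOL-Analysis.Analysis" "HOL-Number_Theory.Fib"
begin

text \<open>The library function fib satisfies fib 1 = fib 2 = 1, matching F_n for n >= 1.\<close>
definition fib_avg :: "nat \<Rightarrow> nat \<Rightarrow> real \<Rightarrow> real" where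
  "fib_avg p N \<gamma> = (1 / real p) *
     (\<Sum>x = 0..p - 1. cmod (\<Sum>n \<in> {n. 1 \<le> n \<and> real n \<le> real N powr \<gamma>}.
        exp (2 * complex_of_real pi * \<i> * complex_of_real (real x * real (fib n) / real p))))"

end

theory Submission
  imports Defs "HOL-Real_Asymp.Real_Asymp"
begin


lemma suc_div_le: "Suc m div q = m div q + (if q dvd Suc m then 1 else 0)" for m q :: nat
  by (auto simp: div_Suc dvd_eq_mod_eq_0)

lemma legendre_aux:
  fixes p B :: nat
  assumes p: "prime p"
  shows "m < p ^ Suc B \<Longrightarrow> multiplicity p (fact m :: nat) = (\<Sum>i\<in>{1..B}. m div p ^ i)"
proof (induction m)
  case 0
  then show ?case by simp
next
  case (Suc m)
  have p1: "p > 1" using p prime_gt_1_nat by blast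
  have IH: "multiplicity p (fact m :: nat) = (\<Sum>i\<in>{1..B}. m div p ^ i)"
    using Suc by simp
  have "fact (Suc m) = (Suc m) * (fact m :: nat)" by (simp only: fact_Suc of_nat_id)
  moreover have "multiplicity p ((Suc m) * (fact m :: nat)) = multiplicity p (Suc m) + multiplicity p (fact m :: nat)"
    by (rule prime_elem_multiplicity_mult_distrib) (use p in auto)
  ultimately have "multiplicity p (fact (Suc m) :: nat) = multiplicity p (Suc m) + multiplicity p (fact m :: nat)"
    by simp
  moreover have "(\<Sum>i\<in>{1..B}. Suc m div p ^ i) = (\<Sum>i\<in>{1..B}. m div p ^ i) + card {i\<in>{1..B}. p ^ i dvd Suc m}"
    by (simp add: suc_div_le sum.distrib sum.If_cases Int_def conj_commute)
  moreover have "{i\<in>{1..B}. p ^ i dvd Suc m} = {1..multiplicity p (Suc m)}"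
  proof -
    have "p ^ multiplicity p (Suc m) \<le> Suc m"
      by (intro dvd_imp_le multiplicity_dvd) auto
    hence "p ^ multiplicity p (Suc m) < p ^ Suc B" using Suc.prems by linarith
    hence "multiplicity p (Suc m) < Suc B" using p1 power_strict_increasing_iff by blast
    hence "multiplicity p (Suc m) \<le> B" by simp
    thus ?thesis using p p1
      by (auto simp: power_dvd_iff_le_multiplicity)
  qed
  ultimately show ?case using IH by simp
qed

lemma central_binom_primepow:
  fixes p n :: nat
  assumes p: "prime p" and n: "n \<ge> 1"
  shows "p ^ multiplicity p ((2*n) choose n) \<le> 2*n"
proof (rule ccontr)
  assume contra: "\<not> ?thesis"
  define v where "v = multiplicity p ((2*n) choose n)"
  define B where "B = 2*n"
  have p1: "p > 1" using p prime_gt_1_nat by blast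
  have lt: "k < p ^ Suc k" for k
  proof -
    have "k < 2 ^ k" by (rule less_exp)
    also have "\<dots> \<le> p ^ k" using p1 by (intro power_mono) auto
    also have "\<dots> \<le> p ^ Suc k" using p1 by simp
    finally show ?thesis .
  qed
  have nB: "n < p ^ Suc B" using lt[of n] p1
    by (metis B_def le_less_trans less_imp_le_nat mult_2 le_add1 lt)
  have fe: "fact (2*n) = ((2*n) choose n) * (fact n * (fact n :: nat))"
    using binomial_fact_lemma[of n "2*n"] by (simp add: mult_ac)
  have "multiplicity p (fact (2*n) :: nat) = v + 2 * multiplicity p (fact n :: nat)"
    unfolding fe v_def using p
    by (simp add: prime_elem_multiplicity_mult_distrib fact_nonzero)
  hence eq: "(\<Sum>i\<in>{1..B}. (2*n) div p ^ i) = v + 2 * (\<Sum>i\<in>{1..B}. n div p ^ i)"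
    using legendre_aux[OF p lt[of "2*n", folded B_def]] legendre_aux[OF p nB] B_def by simp
  have pw: "(2*n) div p ^ i \<le> 2 * (n div p ^ i) + (if p ^ i \<le> 2*n then 1 else 0)" for i
  proof -
    have q: "p ^ i > 0" using p1 by simp
    show ?thesis
    proof (cases "p ^ i \<le> 2*n")
      case True
      have "(2*n) div p^i < 2 * (n div p^i) + 2"
      proof -
        have "n = p^i * (n div p^i) + n mod p^i" by simp
        moreover have "n mod p^i < p^i" using q by simp
        ultimately have "2*n < p^i * (2 * (n div p^i) + 2)"
          by (metis (no_types, lifting) add_mult_distrib2 mult_2 mult_2_right add_less_mono nat_add_left_cancel_less)
        thus ?thesis using q by (simp add: div_less_iff_less_mult mult.commute)
      qed
      thus ?thesis using True by simp
    next
      case False thus ?thesis by simp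
    qed
  qed
  have "(\<Sum>i\<in>{1..B}. (2*n) div p ^ i) \<le> (\<Sum>i\<in>{1..B}. 2 * (n div p ^ i) + (if p ^ i \<le> 2*n then 1 else 0))"
    by (intro sum_mono pw)
  also have "\<dots> = 2 * (\<Sum>i\<in>{1..B}. n div p ^ i) + card {i\<in>{1..B}. p ^ i \<le> 2*n}"
    by (simp add: sum.distrib sum_distrib_left sum.If_cases Int_def conj_commute)
  finally have "v \<le> card {i\<in>{1..B}. p ^ i \<le> 2*n}" using eq by simp
  moreover have "{i\<in>{1..B}. p ^ i \<le> 2*n} \<subseteq> {1..<v}"
  proof
    fix i assume "i \<in> {i\<in>{1..B}. p ^ i \<le> 2*n}"
    hence "p ^ i < p ^ v" "1 \<le> i" using contra v_def by auto
    thus "i \<in> {1..<v}" using p1 by (simp add: power_strict_increasing_iff)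
  qed
  hence "card {i\<in>{1..B}. p ^ i \<le> 2*n} \<le> v - 1"
    by (metis card_atLeastLessThan card_mono finite_atLeastLessThan)
  moreover have "v \<ge> 1" using contra v_def n by (cases v) auto
  ultimately show False by linarith
qed



lemma two_n_le_pow: "2 * n \<le> (2::nat) ^ n"
proof (induction n)
  case 0 then show ?case by simp
next
  case (Suc n)
  show ?case
  proof (cases "n = 0")
    case True then show ?thesis by simp
  next
    case False
    then have "2 \<le> (2::nat) ^ n" using Suc by linarith
    then show ?thesis using Suc by simp
  qed
qed

lemma cheb_aux:
  fixes n :: nat assumes n: "n \<ge> 1"
  shows "real n * ln 2 \<le> real (card {p. prime p \<and> p \<le> 2*n}) * ln (2 * real n)"
proof -
  define C where "C = (2*n) choose n"
  define P where "P = {p. prime p \<and> p \<le> 2*n}"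
  have C0: "C \<noteq> 0" unfolding C_def by simp
  have sub: "prime_factors C \<subseteq> P"
  proof
    fix p assume "p \<in> prime_factors C"
    hence pp: "prime p" "p dvd C" by auto
    have "C dvd fact (2*n)" unfolding C_def
      using binomial_fact_lemma[of n "2*n"] by (metis dvd_triv_right le_add2 mult_2)
    hence "p dvd fact (2*n)" using pp dvd_trans by blast
    thus "p \<in> P" using pp prime_dvd_fact_iff P_def by auto
  qed
  have finP: "finite P" unfolding P_def by simp
  have "C = (\<Prod>p\<in>prime_factors C. p ^ multiplicity p C)"
    using prod_prime_factors[OF C0] by simp
  also have "\<dots> \<le> (\<Prod>p\<in>prime_factors C. 2*n)"
  proof (intro prod_mono conjI)
    fix p assume "p \<in> prime_factors C"
    hence "prime p" by auto
    thus "p ^ multiplicity p C \<le> 2*n" unfolding C_def using central_binom_primepow n by blast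
  qed auto
  also have "\<dots> = (2*n) ^ card (prime_factors C)" by simp
  also have "\<dots> \<le> (2*n) ^ card P"
    using n by (intro power_increasing card_mono finP sub) auto
  finally have CP: "C \<le> (2*n) ^ card P" .
  have "(2::real)^n \<le> 4^n / (2 * real n)"
  proof -
    have "real (2*n) \<le> 2^n" using two_n_le_pow[of n] by (metis of_nat_le_iff of_nat_numeral of_nat_power)
    hence "2^n * (2 * real n) \<le> 2^n * 2^n" by (intro mult_left_mono) auto
    also have "\<dots> = 4^n" by (simp add: power_mult_distrib[symmetric])
    finally show ?thesis using n by (simp add: field_simps)
  qed
  also have "\<dots> \<le> real C" unfolding C_def using central_binomial_lower_bound n by simp
  also have "\<dots> \<le> real ((2*n) ^ card P)" using CP by linarith
  finally have "(2::real)^n \<le> (2 * real n) ^ card P" by simp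
  hence "ln ((2::real)^n) \<le> ln ((2 * real n) ^ card P)" using n by (subst ln_le_cancel_iff; auto)
  moreover have "ln ((2 * real n) ^ card P) = real (card P) * ln (2 * real n)"
    using n by (intro ln_realpow; auto)
  moreover have "ln ((2::real)^n) = real n * ln 2" by (intro ln_realpow; auto)
  ultimately show ?thesis unfolding P_def by simp
qed

lemma cheb:
  fixes N :: nat assumes N: "N \<ge> 2"
  shows "real N / (6 * ln (real N)) \<le> real (card {p. prime p \<and> p \<le> N})"
proof -
  define n where "n = N div 2"
  have n1: "n \<ge> 1" using N n_def by simp
  have nN: "2*n \<le> N" "real N \<le> 2 * real n + 1" using n_def by linarith+
  have lnN: "ln (real N) > 0" using N by simp
  have "real n * ln 2 \<le> real (card {p. prime p \<and> p \<le> 2*n}) * ln (2 * real n)" by (rule cheb_aux[OF n1])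
  also have "\<dots> \<le> real (card {p. prime p \<and> p \<le> N}) * ln (real N)"
  proof (intro mult_mono)
    show "real (card {p. prime p \<and> p \<le> 2*n}) \<le> real (card {p. prime p \<and> p \<le> N})"
      using nN by (intro of_nat_mono card_mono) auto
    show "ln (2 * real n) \<le> ln (real N)" using nN n1 by simp
  qed (use n1 in auto)
  finally have "real n * ln 2 \<le> real (card {p. prime p \<and> p \<le> N}) * ln (real N)" .
  moreover have "real N / 6 \<le> real n * ln 2"
  proof -
    have "ln (2::real) \<ge> 1/2" using ln2_ge_two_thirds by linarith
    moreover have "real N \<le> 3 * real n" using nN n1 by simp
    moreover have "real n * (1/2) \<le> real n * ln 2" using \<open>ln 2 \<ge> 1/2\<close> by (intro mult_left_mono) auto
    ultimately show ?thesis by linarith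
  qed
  ultimately have "real N / 6 \<le> real (card {p. prime p \<and> p \<le> N}) * ln (real N)" by linarith
  thus ?thesis using lnN by (simp add: field_simps)
qed



definition ee :: "real \<Rightarrow> complex" where
  "ee t = exp (2 * complex_of_real pi * \<i> * complex_of_real t)"

lemma ee_add: "ee (a + b) = ee a * ee b"
  unfolding ee_def by (simp add: distrib_left exp_add[symmetric])

lemma ee_minus: "cnj (ee t) = ee (- t)"
  unfolding ee_def by (simp add: exp_cnj)

lemma ee_int: "ee (of_int k) = 1"
proof -
  have "ee (of_int k) = exp ((2 * of_int k * pi) * \<i>)" unfolding ee_def by (simp add: mult_ac)
  also have "\<dots> = 1" by (rule exp_integer_2pi) simp
  finally show ?thesis .
qed

lemma ee_eq_1: "ee t = 1 \<Longrightarrow> t \<in> \<int>"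
proof -
  assume "ee t = 1"
  hence "exp (2 * complex_of_real pi * \<i> * complex_of_real t) = 1" unfolding ee_def .
  then obtain n :: int where "Im (2 * complex_of_real pi * \<i> * complex_of_real t) = of_int (2 * n) * pi"
    unfolding exp_eq_1 by blast
  hence "2 * pi * t = 2 * of_int n * pi" by simp
  hence "t = of_int n" using pi_gt_zero by (simp add: mult_ac)
  thus "t \<in> \<int>" by simp
qed

lemma ee_pow: "ee (real x * t) = ee t ^ x"
proof -
  have "ee (real x * t) = exp (of_nat x * (2 * complex_of_real pi * \<i> * complex_of_real t))"
    unfolding ee_def by (simp add: mult_ac)
  thus ?thesis unfolding ee_def by (simp add: exp_of_nat_mult)
qed

lemma ortho:
  fixes p :: nat and t :: int assumes p: "p > 0"
  shows "(\<Sum>x<p. ee (real x * of_int t / real p)) = (if int p dvd t then of_nat p else 0)"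
proof (cases "int p dvd t")
  case True
  then obtain k where k: "t = int p * k" by blast
  have "ee (real x * of_int t / real p) = 1" for x
  proof -
    have "real x * of_int t / real p = of_int (int x * k)" using p k by simp
    thus ?thesis using ee_int[of "int x * k"] by simp
  qed
  thus ?thesis using True by simp
next
  case False
  define w where "w = ee (of_int t / real p)"
  have eqs: "ee (real x * of_int t / real p) = w ^ x" for x
    unfolding w_def using ee_pow[of x "of_int t / real p"] by simp
  have w1: "w \<noteq> 1"
  proof
    assume "w = 1"
    hence "of_int t / real p \<in> \<int>" unfolding w_def by (rule ee_eq_1)
    then obtain m where m: "of_int t / real p = of_int m" by (elim Ints_cases)
    hence "of_int t = real p * of_int m" using p by (simp add: field_simps)
    hence "t = int p * m" by (metis of_int_eq_iff of_int_mult of_int_of_nat_eq)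
    thus False using False by simp
  qed
  have wp: "w ^ p = 1"
  proof -
    have "w ^ p = ee (real p * (of_int t / real p))" by (simp only: ee_pow w_def)
    also have "\<dots> = ee (of_int t)" using p by simp
    finally show ?thesis by (simp add: ee_int)
  qed
  have "(\<Sum>x<p. ee (real x * of_int t / real p)) = (\<Sum>x<p. w ^ x)" by (simp add: eqs)
  also have "\<dots> = 0" using geometric_sum[OF w1, of p] wp by simp
  finally show ?thesis using False by simp
qed

lemma moment:
  fixes p :: nat and I :: "'a set" and g :: "'a \<Rightarrow> int"
  assumes p: "p > 0" and I: "finite I"
  shows "(\<Sum>x<p. (cmod (\<Sum>i\<in>I. ee (real x * of_int (g i) / real p)))^2)
         = real p * real (card {ij \<in> I \<times> I. int p dvd g (fst ij) - g (snd ij)})"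
proof -
  define S where "S x = (\<Sum>i\<in>I. ee (real x * of_int (g i) / real p))" for x
  have sq: "complex_of_real ((cmod (S x))^2) =
      (\<Sum>ij\<in>I \<times> I. ee (real x * of_int (g (fst ij) - g (snd ij)) / real p))" for x
  proof -
    have "complex_of_real ((cmod (S x))^2) = S x * cnj (S x)" by (rule complex_norm_square)
    also have "\<dots> = (\<Sum>i\<in>I. \<Sum>j\<in>I. ee (real x * of_int (g i) / real p) * cnj (ee (real x * of_int (g j) / real p)))"
      unfolding S_def cnj_sum sum_product by (rule refl)
    also have "\<dots> = (\<Sum>i\<in>I. \<Sum>j\<in>I. ee (real x * of_int (g i - g j) / real p))"
    proof (intro sum.cong refl)
      fix i j
      have "ee (real x * of_int (g i) / real p) * cnj (ee (real x * of_int (g j) / real p))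
          = ee (real x * of_int (g i) / real p + - (real x * of_int (g j) / real p))"
        by (simp only: ee_add ee_minus)
      also have "real x * of_int (g i) / real p + - (real x * of_int (g j) / real p) = real x * of_int (g i - g j) / real p"
        by (simp add: right_diff_distrib diff_divide_distrib)
      finally show "ee (real x * of_int (g i) / real p) * cnj (ee (real x * of_int (g j) / real p)) = ee (real x * of_int (g i - g j) / real p)" .
    qed
    also have "\<dots> = (\<Sum>ij\<in>I \<times> I. ee (real x * of_int (g (fst ij) - g (snd ij)) / real p))"
      by (simp add: sum.cartesian_product case_prod_beta)
    finally show ?thesis .
  qed
  have "complex_of_real (\<Sum>x<p. (cmod (S x))^2) = (\<Sum>x<p. \<Sum>ij\<in>I \<times> I. ee (real x * of_int (g (fst ij) - g (snd ij)) / real p))"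
    unfolding of_real_sum by (intro sum.cong refl sq)
  also have "\<dots> = (\<Sum>ij\<in>I \<times> I. \<Sum>x<p. ee (real x * of_int (g (fst ij) - g (snd ij)) / real p))"
    by (rule sum.swap)
  also have "\<dots> = (\<Sum>ij\<in>I \<times> I. if int p dvd g (fst ij) - g (snd ij) then of_nat p else 0)"
    by (intro sum.cong refl) (rule ortho[OF p])
  also have "\<dots> = of_nat p * of_nat (card {ij \<in> I \<times> I. int p dvd g (fst ij) - g (snd ij)})"
    using I by (simp add: sum.If_cases Int_def conj_commute)
  finally have "complex_of_real (\<Sum>x<p. (cmod (S x))^2) = complex_of_real (real p * real (card {ij \<in> I \<times> I. int p dvd g (fst ij) - g (snd ij)}))"
    by simp
  thus ?thesis unfolding S_def of_real_eq_iff .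
qed



lemma mom_ineq1:
  fixes u :: "'a \<Rightarrow> real"
  shows "(\<Sum>x\<in>X. u x)^4 \<le> real (card X)^3 * (\<Sum>x\<in>X. u x ^ 4)"
proof -
  have c1: "(\<Sum>x\<in>X. u x)^2 \<le> real (card X) * (\<Sum>x\<in>X. u x ^ 2)"
    using Cauchy_Schwarz_ineq_sum[of "\<lambda>_. 1" u X] by simp
  have c2: "(\<Sum>x\<in>X. u x ^ 2)^2 \<le> real (card X) * (\<Sum>x\<in>X. u x ^ 4)"
    using Cauchy_Schwarz_ineq_sum[of "\<lambda>_. 1" "\<lambda>x. u x ^ 2" X] by (simp add: power_mult[symmetric])
  have "(\<Sum>x\<in>X. u x)^4 = ((\<Sum>x\<in>X. u x)^2)^2" by (simp add: power_mult[symmetric])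
  also have "\<dots> \<le> (real (card X) * (\<Sum>x\<in>X. u x ^ 2))^2"
    using c1 by (intro power_mono) auto
  also have "\<dots> = real (card X)^2 * (\<Sum>x\<in>X. u x ^ 2)^2" by (simp add: power_mult_distrib)
  also have "\<dots> \<le> real (card X)^2 * (real (card X) * (\<Sum>x\<in>X. u x ^ 4))"
    using c2 by (intro mult_left_mono) auto
  also have "\<dots> = real (card X)^3 * (\<Sum>x\<in>X. u x ^ 4)" by (simp add: power3_eq_cube power2_eq_square)
  finally show ?thesis .
qed

lemma mom_ineq2:
  fixes u :: "'a \<Rightarrow> real"
  assumes nn: "\<And>x. x \<in> X \<Longrightarrow> u x \<ge> 0"
  shows "(\<Sum>x\<in>X. u x ^ 2)^3 \<le> (\<Sum>x\<in>X. u x)^2 * (\<Sum>x\<in>X. u x ^ 4)"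
proof -
  define A1 where "A1 = (\<Sum>x\<in>X. u x)"
  define A2 where "A2 = (\<Sum>x\<in>X. u x ^ 2)"
  define A3 where "A3 = (\<Sum>x\<in>X. u x ^ 3)"
  define A4 where "A4 = (\<Sum>x\<in>X. u x ^ 4)"
  have A2nn: "A2 \<ge> 0" unfolding A2_def by (intro sum_nonneg) auto
  have A4nn: "A4 \<ge> 0" unfolding A4_def by (intro sum_nonneg) auto
  have A1nn: "A1 \<ge> 0" unfolding A1_def using nn by (intro sum_nonneg) auto
  have A3nn: "A3 \<ge> 0" unfolding A3_def using nn by (intro sum_nonneg) auto
  have c1: "A2^2 \<le> A1 * A3"
  proof -
    have "A2 = (\<Sum>x\<in>X. sqrt (u x) * (sqrt (u x) * u x))"
      unfolding A2_def using nn by (intro sum.cong refl) (simp add: power2_eq_square mult.assoc[symmetric])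
    hence "A2^2 \<le> (\<Sum>x\<in>X. (sqrt (u x))^2) * (\<Sum>x\<in>X. (sqrt (u x) * u x)^2)"
      using Cauchy_Schwarz_ineq_sum by metis
    also have "(\<Sum>x\<in>X. (sqrt (u x))^2) = A1" unfolding A1_def using nn by (intro sum.cong refl) simp
    also have "(\<Sum>x\<in>X. (sqrt (u x) * u x)^2) = A3" unfolding A3_def using nn
      by (intro sum.cong refl) (simp add: power_mult_distrib power3_eq_cube power2_eq_square)
    finally show ?thesis .
  qed
  have c2: "A3^2 \<le> A2 * A4"
  proof -
    have "A3 = (\<Sum>x\<in>X. u x * u x ^ 2)" unfolding A3_def by (simp add: power3_eq_cube power2_eq_square mult.assoc)
    hence "A3^2 \<le> (\<Sum>x\<in>X. (u x)^2) * (\<Sum>x\<in>X. (u x ^ 2)^2)"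
      using Cauchy_Schwarz_ineq_sum by metis
    thus ?thesis unfolding A2_def A4_def by (simp add: power_mult[symmetric])
  qed
  have "A2^4 = (A2^2)^2" by (simp add: power_mult[symmetric])
  also have "\<dots> \<le> (A1 * A3)^2" using c1 A2nn by (intro power_mono) auto
  also have "\<dots> = A1^2 * A3^2" by (simp add: power_mult_distrib)
  also have "\<dots> \<le> A1^2 * (A2 * A4)" using c2 by (intro mult_left_mono) auto
  finally have "A2 * A2^3 \<le> A2 * (A1^2 * A4)" by (simp add: power_numeral_reduce mult_ac)
  hence "A2^3 \<le> A1^2 * A4" if "A2 > 0" using that by simp
  moreover have "A2^3 \<le> A1^2 * A4" if "A2 = 0" using that A4nn by simp
  ultimately show ?thesis using A2nn unfolding A1_def A2_def A4_def by force
qed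



lemma fib_step: assumes n2: "n \<ge> 2" shows "fib n < fib (Suc n)"
proof (cases n)
  case 0 then show ?thesis using n2 by simp
next
  case (Suc m)
  obtain k where k: "n = Suc (Suc k)" using Suc n2 by (cases m) auto
  have "fib (Suc k) > 0" by (simp add: fib_neq_0_nat)
  thus ?thesis unfolding k by simp
qed

lemma fib_strict: "2 \<le> m \<Longrightarrow> m < n \<Longrightarrow> fib m < fib n"
proof (induction n)
  case 0 then show ?case by simp
next
  case (Suc n)
  show ?case
  proof (cases "m = n")
    case True then show ?thesis using fib_step Suc.prems by simp
  next
    case False
    hence "m < n" using Suc.prems by simp
    hence "fib m < fib n" using Suc.IH Suc.prems by simp
    moreover have "fib n < fib (Suc n)" using fib_step Suc.prems \<open>m < n\<close> by simp
    ultimately show ?thesis by simp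
  qed
qed

lemma fib_le_pow2: "fib n \<le> 2 ^ n \<and> fib (Suc n) \<le> 2 ^ Suc n"
proof (induction n)
  case 0 then show ?case by simp
next
  case (Suc n)
  have "fib (Suc (Suc n)) = fib (Suc n) + fib n" by simp
  also have "\<dots> \<le> 2 ^ Suc n + 2 ^ n" using Suc by simp
  also have "\<dots> \<le> 2 ^ Suc (Suc n)" by simp
  finally show ?case using Suc by simp
qed

lemma fib_le_pow: "fib n \<le> 2 ^ n"
  using fib_le_pow2 by blast

lemma fib_card_eq:
  assumes I: "finite I" "\<And>i. i \<in> I \<Longrightarrow> i \<ge> 1"
  shows "card {d \<in> (I::nat set). fib d = t} \<le> 2"
proof -
  have sub: "{d \<in> I. fib d = t} \<subseteq> {1} \<union> {d \<in> I. d \<ge> 2 \<and> fib d = t}"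
  proof
    fix d assume d: "d \<in> {d \<in> I. fib d = t}"
    hence "d \<ge> 1" using I(2) by auto
    hence "d = 1 \<or> d \<ge> 2" by linarith
    thus "d \<in> {1} \<union> {d \<in> I. d \<ge> 2 \<and> fib d = t}" using d by auto
  qed
  have c1: "card {d \<in> I. d \<ge> 2 \<and> fib d = t} \<le> 1"
  proof -
    have fin: "finite {d \<in> I. d \<ge> 2 \<and> fib d = t}" using I by simp
    have "\<forall>x\<in>{d \<in> I. d \<ge> 2 \<and> fib d = t}. \<forall>y\<in>{d \<in> I. d \<ge> 2 \<and> fib d = t}. x = y"
    proof (intro ballI)
      fix x y assume x: "x \<in> {d \<in> I. d \<ge> 2 \<and> fib d = t}" and y: "y \<in> {d \<in> I. d \<ge> 2 \<and> fib d = t}"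
      show "x = y"
      proof (rule ccontr)
        assume "x \<noteq> y"
        hence "x < y \<or> y < x" by linarith
        thus False using fib_strict[of x y] fib_strict[of y x] x y by auto
      qed
    qed
    thus ?thesis using card_le_Suc0_iff_eq[OF fin] by simp
  qed
  have "card {d \<in> I. fib d = t} \<le> card ({1} \<union> {d \<in> I. d \<ge> 2 \<and> fib d = t})"
    using I by (intro card_mono sub) auto
  also have "\<dots> \<le> card {1::nat} + card {d \<in> I. d \<ge> 2 \<and> fib d = t}" by (rule card_Un_le)
  finally show ?thesis using c1 by simp
qed

lemma fib_gap: "c \<ge> 1 \<Longrightarrow> c + 3 \<le> c' \<Longrightarrow> fib c' > 2 * fib c"
proof -
  assume c: "c \<ge> 1" "c + 3 \<le> c'"
  have e: "c + 3 = Suc (Suc (Suc c))" "c + 1 = Suc c" by simp_all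
  have "fib (Suc (Suc (Suc c))) = 2 * fib (Suc c) + fib c" by simp
  hence "fib (c+3) = 2 * fib (c+1) + fib c" by (simp only: e)
  moreover have "fib (c+1) \<ge> fib c" by (rule fib_mono) simp
  moreover have "fib c > 0" using c by (simp add: fib_neq_0_nat)
  ultimately have "fib (c+3) > 2 * fib c" by linarith
  moreover have "fib c' \<ge> fib (c+3)" using c by (intro fib_mono)
  ultimately show ?thesis by linarith
qed

lemma card_C:
  assumes I: "finite I" "\<And>i. i \<in> I \<Longrightarrow> i \<ge> 1"
  shows "card {c \<in> (I::nat set). fib c \<le> v \<and> v \<le> 2 * fib c} \<le> 3"
proof (cases "{c \<in> I. fib c \<le> v \<and> v \<le> 2 * fib c} = {}")
  case True then show ?thesis by (metis card.empty le0)
next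
  case False
  define C where "C = {c \<in> I. fib c \<le> v \<and> v \<le> 2 * fib c}"
  have fC: "finite C" using I C_def by simp
  define m where "m = Min C"
  have mC: "m \<in> C" using False fC C_def m_def Min_in by blast
  have "C \<subseteq> {m..<m+3}"
  proof
    fix c assume c: "c \<in> C"
    have "m \<le> c" using c fC m_def by simp
    moreover have "c < m + 3"
    proof (rule ccontr)
      assume "\<not> c < m + 3"
      hence "fib c > 2 * fib m" using mC I(2) C_def by (intro fib_gap) auto
      thus False using c mC C_def by auto
    qed
    ultimately show "c \<in> {m..<m+3}" by simp
  qed
  hence "card C \<le> card {m..<m+3}" by (intro card_mono) auto
  thus ?thesis unfolding C_def by simp
qed

lemma card_pairs:
  assumes I: "finite I" "\<And>i. i \<in> I \<Longrightarrow> i \<ge> 1"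
  shows "card {cd \<in> (I::nat set) \<times> I. fib (fst cd) + fib (snd cd) = v} \<le> 12"
proof -
  define C where "C = {c \<in> I. fib c \<le> v \<and> v \<le> 2 * fib c}"
  define T1 where "T1 = {cd \<in> I \<times> I. fib (fst cd) + fib (snd cd) = v \<and> snd cd \<le> fst cd}"
  have T1sub: "T1 \<subseteq> (\<Union>c\<in>C. (\<lambda>d. (c, d)) ` {d \<in> I. fib d = v - fib c})"
  proof
    fix cd assume cd: "cd \<in> T1"
    obtain c d where cdd: "cd = (c, d)" by force
    have h: "c \<in> I" "d \<in> I" "fib c + fib d = v" "d \<le> c" using cd cdd T1_def by auto
    have "fib d \<le> fib c" using h by (intro fib_mono)
    hence "c \<in> C" using h C_def by auto
    moreover have "d \<in> {d \<in> I. fib d = v - fib c}" using h by auto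
    ultimately show "cd \<in> (\<Union>c\<in>C. (\<lambda>d. (c, d)) ` {d \<in> I. fib d = v - fib c})" using cdd by blast
  qed
  have "card T1 \<le> card (\<Union>c\<in>C. (\<lambda>d. (c, d)) ` {d \<in> I. fib d = v - fib c})"
    using I by (intro card_mono T1sub) (auto simp: C_def)
  also have "\<dots> \<le> (\<Sum>c\<in>C. card ((\<lambda>d. (c, d)) ` {d \<in> I. fib d = v - fib c}))"
    by (rule card_UN_le) (use I in \<open>simp add: C_def\<close>)
  also have "\<dots> \<le> (\<Sum>c\<in>C. 2)"
  proof (intro sum_mono)
    fix c
    have "card ((\<lambda>d. (c, d)) ` {d \<in> I. fib d = v - fib c}) \<le> card {d \<in> I. fib d = v - fib c}"
      by (rule card_image_le) (use I in simp)
    also have "\<dots> \<le> 2" by (rule fib_card_eq[OF I])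
    finally show "card ((\<lambda>d. (c, d)) ` {d \<in> I. fib d = v - fib c}) \<le> 2" .
  qed
  also have "\<dots> \<le> 6" using card_C[OF I, of v] C_def by simp
  finally have T1c: "card T1 \<le> 6" .
  define T2 where "T2 = (\<lambda>(c, d). (d, c)) ` T1"
  have fT1: "finite T1" using I unfolding T1_def by simp
  have T2c: "card T2 \<le> 6" using T1c card_image_le[OF fT1, of "\<lambda>(c, d). (d, c)"] unfolding T2_def by linarith
  have "{cd \<in> I \<times> I. fib (fst cd) + fib (snd cd) = v} \<subseteq> T1 \<union> T2"
  proof
    fix cd assume cd: "cd \<in> {cd \<in> I \<times> I. fib (fst cd) + fib (snd cd) = v}"
    obtain c d where cdd: "cd = (c, d)" by force
    show "cd \<in> T1 \<union> T2"
    proof (cases "d \<le> c")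
      case True thus ?thesis using cd cdd T1_def by auto
    next
      case False
      hence "(d, c) \<in> T1" using cd cdd T1_def by auto
      hence "(c, d) \<in> T2" unfolding T2_def by (metis (no_types, lifting) case_prod_conv image_eqI)
      thus ?thesis using cdd by simp
    qed
  qed
  hence "card {cd \<in> I \<times> I. fib (fst cd) + fib (snd cd) = v} \<le> card (T1 \<union> T2)"
    using I by (intro card_mono) (auto simp: T1_def T2_def)
  also have "\<dots> \<le> card T1 + card T2" by (rule card_Un_le)
  finally show ?thesis using T1c T2c by simp
qed



lemma card_prime_divisors:
  fixes m :: int assumes m: "m \<noteq> 0" "\<bar>m\<bar> \<le> 2 ^ L"
  shows "card {p::nat. prime p \<and> int p dvd m} \<le> L"
proof -
  define n where "n = nat \<bar>m\<bar>"
  have n0: "n \<noteq> 0" using m n_def by simp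
  have eq: "{p::nat. prime p \<and> int p dvd m} = prime_factors n"
  proof -
    have "int p dvd m \<longleftrightarrow> p dvd n" for p
      unfolding n_def by (metis dvd_abs_iff int_dvd_int_iff abs_ge_zero nat_0_le)
    thus ?thesis using prime_factors_dvd[OF n0] by auto
  qed
  have "(2::nat) ^ card (prime_factors n) = (\<Prod>p\<in>prime_factors n. 2)" by simp
  also have "\<dots> \<le> (\<Prod>p\<in>prime_factors n. p ^ multiplicity p n)"
  proof (intro prod_mono conjI)
    fix p assume p: "p \<in> prime_factors n"
    have "p \<in> {p. prime p \<and> multiplicity p n > 0}" using p prime_factors_multiplicity[of n] by blast
    hence "prime p" "multiplicity p n \<ge> 1" by auto
    hence p2: "2 \<le> p" using prime_ge_2_nat by auto
    have "p ^ 1 \<le> p ^ multiplicity p n" using p2 \<open>multiplicity p n \<ge> 1\<close> by (intro power_increasing) auto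
    hence "p \<le> p ^ multiplicity p n" by simp
    note p2 this
    thus "2 \<le> p ^ multiplicity p n" by linarith
  qed auto
  also have "\<dots> = n" using prod_prime_factors[OF n0] by simp
  also have "n \<le> 2 ^ L"
  proof -
    have "int n = \<bar>m\<bar>" unfolding n_def by simp
    hence "int n \<le> int (2 ^ L)" using m by simp
    thus ?thesis by (simp only: of_nat_le_iff)
  qed
  finally have "(2::nat) ^ card (prime_factors n) \<le> 2 ^ L" .
  hence "card (prime_factors n) \<le> L" by (rule power_le_imp_le_exp[rotated]) simp
  thus ?thesis using eq by simp
qed

lemma sum_card_swap:
  assumes "finite P" "finite Q"
  shows "(\<Sum>p\<in>P. card {q\<in>Q. R p q}) = (\<Sum>q\<in>Q. card {p\<in>P. R p q})"
proof -
  have c: "card {q\<in>Q. R p q} = (\<Sum>q\<in>Q. if R p q then 1 else 0)" for p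
    using assms by (simp add: sum.If_cases Int_def conj_commute)
  have d: "card {p\<in>P. R p q} = (\<Sum>p\<in>P. if R p q then 1 else 0)" for q
    using assms by (simp add: sum.If_cases Int_def conj_commute)
  show ?thesis unfolding c d by (rule sum.swap)
qed

lemma bad_count:
  assumes P: "finite P" and Q: "finite Q" and L: "\<And>q. q \<in> Q \<Longrightarrow> card {p\<in>P. R p q} \<le> L"
  shows "card {p\<in>P. card {q\<in>Q. R p q} > T} * T \<le> card Q * L"
proof -
  define B where "B = {p\<in>P. card {q\<in>Q. R p q} > T}"
  have "card B * T = (\<Sum>p\<in>B. T)" by simp
  also have "\<dots> \<le> (\<Sum>p\<in>B. card {q\<in>Q. R p q})" by (intro sum_mono) (auto simp: B_def)
  also have "\<dots> \<le> (\<Sum>p\<in>P. card {q\<in>Q. R p q})" using P by (intro sum_mono2) (auto simp: B_def)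
  also have "\<dots> = (\<Sum>q\<in>Q. card {p\<in>P. R p q})" by (rule sum_card_swap[OF P Q])
  also have "\<dots> \<le> (\<Sum>q\<in>Q. L)" by (intro sum_mono L)
  also have "\<dots> = card Q * L" by simp
  finally show ?thesis unfolding B_def .
qed



definition gg :: "nat \<times> nat \<Rightarrow> int" where "gg ab = int (fib (fst ab) + fib (snd ab))"

definition Ecount :: "nat \<Rightarrow> nat \<Rightarrow> nat" where
  "Ecount K p = card {q \<in> ({1..K} \<times> {1..K}) \<times> ({1..K} \<times> {1..K}).
      gg (fst q) \<noteq> gg (snd q) \<and> int p dvd gg (fst q) - gg (snd q)}"

lemma Zcount:
  "card {q \<in> ({1..K} \<times> {1..K}) \<times> ({1..K} \<times> {1..K}). gg (fst q) = gg (snd q)} \<le> 12 * K^2"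
proof -
  define I where "I = {1..K::nat}"
  define J where "J = I \<times> I"
  have fJ: "finite J" unfolding J_def I_def by simp
  have eq: "{q \<in> J \<times> J. gg (fst q) = gg (snd q)} =
      (SIGMA ab:J. {cd \<in> I \<times> I. fib (fst cd) + fib (snd cd) = fib (fst ab) + fib (snd ab)})"
    unfolding J_def gg_def by auto
  have "card {q \<in> J \<times> J. gg (fst q) = gg (snd q)}
      = (\<Sum>ab\<in>J. card {cd \<in> I \<times> I. fib (fst cd) + fib (snd cd) = fib (fst ab) + fib (snd ab)})"
    unfolding eq using fJ by (intro card_SigmaI) (auto simp: I_def)
  also have "\<dots> \<le> (\<Sum>ab\<in>J. 12)"
    by (intro sum_mono card_pairs) (auto simp: I_def)
  also have "\<dots> = 12 * K^2" unfolding J_def I_def by (simp add: power2_eq_square)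
  finally show ?thesis unfolding J_def I_def .
qed

lemma per_prime:
  fixes p K :: nat
  assumes p: "prime p" and K: "K \<ge> 1" and E: "Ecount K p \<le> K^2"
  defines "A \<equiv> (1 / real p) * (\<Sum>x<p. cmod (\<Sum>n\<in>{1..K}. ee (real x * of_int (int (fib n)) / real p)))"
  shows "A \<le> 2 * sqrt (real K)" and "sqrt (real K / 13) \<le> A"
proof -
  define I where "I = {1..K::nat}"
  define J where "J = I \<times> I"
  have fI: "finite I" and fJ: "finite J" unfolding J_def I_def by simp_all
  have p0: "p > 0" using p prime_gt_0_nat by blast
  define S where "S x = (\<Sum>n\<in>I. ee (real x * of_int (int (fib n)) / real p))" for x
  define u where "u x = cmod (S x)" for x
  have unn: "u x \<ge> 0" for x unfolding u_def by simp
  define M2 where "M2 = card {ij \<in> I \<times> I. int p dvd int (fib (fst ij)) - int (fib (snd ij))}"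
  define M4 where "M4 = card {q \<in> J \<times> J. int p dvd gg (fst q) - gg (snd q)}"
  have A2: "(\<Sum>x<p. u x ^ 2) = real p * real M2"
    unfolding u_def S_def M2_def by (rule moment[OF p0 fI])
  have S2: "S x ^ 2 = (\<Sum>ab\<in>J. ee (real x * of_int (gg ab) / real p))" for x
  proof -
    have "S x ^ 2 = (\<Sum>a\<in>I. \<Sum>b\<in>I. ee (real x * of_int (int (fib a)) / real p) * ee (real x * of_int (int (fib b)) / real p))"
      unfolding S_def power2_eq_square sum_product by (rule refl)
    also have "\<dots> = (\<Sum>a\<in>I. \<Sum>b\<in>I. ee (real x * of_int (gg (a, b)) / real p))"
    proof (intro sum.cong refl)
      fix a b
      have "real x * of_int (int (fib a)) / real p + real x * of_int (int (fib b)) / real p = real x * of_int (gg (a, b)) / real p"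
        unfolding gg_def by (simp add: add_divide_distrib distrib_left)
      thus "ee (real x * of_int (int (fib a)) / real p) * ee (real x * of_int (int (fib b)) / real p) = ee (real x * of_int (gg (a, b)) / real p)"
        by (metis ee_add)
    qed
    also have "\<dots> = (\<Sum>ab\<in>J. ee (real x * of_int (gg ab) / real p))"
      unfolding J_def by (simp add: sum.cartesian_product case_prod_beta)
    finally show ?thesis .
  qed
  have A4: "(\<Sum>x<p. u x ^ 4) = real p * real M4"
  proof -
    have "u x ^ 4 = (cmod (\<Sum>ab\<in>J. ee (real x * of_int (gg ab) / real p)))^2" for x
    proof -
      have "u x ^ 4 = (u x ^ 2)^2" by (simp add: power_mult[symmetric])
      also have "u x ^ 2 = cmod (S x ^ 2)" unfolding u_def by (simp add: norm_power)
      finally show ?thesis by (simp add: S2)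
    qed
    hence "(\<Sum>x<p. u x ^ 4) = (\<Sum>x<p. (cmod (\<Sum>ab\<in>J. ee (real x * of_int (gg ab) / real p)))^2)" by simp
    also have "\<dots> = real p * real M4" unfolding M4_def by (rule moment[OF p0 fJ])
    finally show ?thesis .
  qed
  have M2K: "M2 \<ge> K"
  proof -
    have "(\<lambda>i. (i, i)) ` I \<subseteq> {ij \<in> I \<times> I. int p dvd int (fib (fst ij)) - int (fib (snd ij))}" by auto
    hence "card ((\<lambda>i. (i, i)) ` I) \<le> M2" unfolding M2_def using fI by (intro card_mono) auto
    moreover have "card ((\<lambda>i. (i, i)) ` I) = K" unfolding I_def by (subst card_image) (auto simp: inj_on_def)
    ultimately show ?thesis by simp
  qed
  have M4K: "M4 \<le> 13 * K^2"
  proof -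
    have "{q \<in> J \<times> J. int p dvd gg (fst q) - gg (snd q)} \<subseteq>
        {q \<in> J \<times> J. gg (fst q) = gg (snd q)} \<union> {q \<in> J \<times> J. gg (fst q) \<noteq> gg (snd q) \<and> int p dvd gg (fst q) - gg (snd q)}"
      by auto
    hence "M4 \<le> card ({q \<in> J \<times> J. gg (fst q) = gg (snd q)} \<union> {q \<in> J \<times> J. gg (fst q) \<noteq> gg (snd q) \<and> int p dvd gg (fst q) - gg (snd q)})"
      unfolding M4_def using fJ by (intro card_mono) auto
    also have "\<dots> \<le> card {q \<in> J \<times> J. gg (fst q) = gg (snd q)} + card {q \<in> J \<times> J. gg (fst q) \<noteq> gg (snd q) \<and> int p dvd gg (fst q) - gg (snd q)}"
      by (rule card_Un_le)
    also have "\<dots> \<le> 12 * K^2 + K^2" using Zcount[of K] E unfolding Ecount_def J_def I_def by linarith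
    finally show ?thesis by simp
  qed
  define A1 where "A1 = (\<Sum>x<p. u x)"
  have AA: "A = A1 / real p" unfolding A_def A1_def u_def S_def I_def by simp
  have A1nn: "A1 \<ge> 0" unfolding A1_def using unn by (intro sum_nonneg) auto
  have Ann: "A \<ge> 0" using AA A1nn by simp
  have pp: "real p > 0" using p0 by simp
  have "A1^4 \<le> real p ^ 3 * (real p * real M4)"
    using mom_ineq1[of u "{..<p}"] A4 unfolding A1_def by simp
  hence "(A * real p)^4 \<le> real p ^ 4 * real M4" using AA pp by (simp add: power_numeral_reduce)
  hence "A^4 * real p ^ 4 \<le> real M4 * real p ^ 4" by (simp add: power_mult_distrib mult_ac)
  hence A4le: "A^4 \<le> real M4" using pp by simp
  have "real M4 \<le> 13 * real K ^ 2" using M4K by (metis of_nat_le_iff of_nat_mult of_nat_numeral of_nat_power)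
  hence "(A^2)^2 \<le> (4 * real K)^2" using A4le by (simp add: power_mult[symmetric] power_mult_distrib)
  hence "A^2 \<le> 4 * real K" by (rule power2_le_imp_le) simp
  hence "sqrt (A^2) \<le> sqrt (4 * real K)" by (rule real_sqrt_le_mono)
  thus "A \<le> 2 * sqrt (real K)" using Ann by (simp add: real_sqrt_mult)
  have h1: "(real p * real M2)^3 \<le> A1^2 * (real p * real M4)"
    using mom_ineq2[of "{..<p}" u] A2 A4 unn unfolding A1_def by simp
  have h2: "(real p * real K)^3 \<le> (real p * real M2)^3"
    using M2K pp by (intro power_mono mult_left_mono) auto
  have h3: "A1^2 * (real p * real M4) \<le> A1^2 * (real p * (13 * real K ^ 2))"
    using \<open>real M4 \<le> 13 * real K ^ 2\<close> pp by (intro mult_left_mono) auto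
  have "(real p * real K)^3 \<le> A1^2 * (real p * (13 * real K ^ 2))"
    using order_trans[OF h2 order_trans[OF h1 h3]] .
  moreover have "A1 = A * real p" using AA pp by simp
  ultimately have "(real p * real K)^3 \<le> (A * real p)^2 * (real p * (13 * real K ^ 2))"
    by simp
  hence "real K * (real p ^ 3 * real K ^ 2) \<le> (13 * A^2) * (real p ^ 3 * real K ^ 2)"
    by (simp add: power_mult_distrib power_numeral_reduce mult_ac)
  moreover have "real p ^ 3 * real K ^ 2 > 0" using pp K by simp
  ultimately have "real K \<le> 13 * A^2" by (rule mult_right_le_imp_le)
  hence "real K / 13 \<le> A^2" by simp
  hence "sqrt (real K / 13) \<le> sqrt (A^2)" by (rule real_sqrt_le_mono)
  thus "sqrt (real K / 13) \<le> A" using Ann by simp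
qed



lemma index_set:
  assumes "y \<ge> 0"
  shows "{n::nat. 1 \<le> n \<and> real n \<le> y} = {1..nat \<lfloor>y\<rfloor>}"
proof -
  have eq: "real n \<le> y \<longleftrightarrow> n \<le> nat \<lfloor>y\<rfloor>" for n
  proof
    assume "real n \<le> y" thus "n \<le> nat \<lfloor>y\<rfloor>" by (rule le_nat_floor)
  next
    assume a: "n \<le> nat \<lfloor>y\<rfloor>"
    have f0: "\<lfloor>y\<rfloor> \<ge> 0" using assms by simp
    have "int n \<le> int (nat \<lfloor>y\<rfloor>)" using a by (simp only: of_nat_le_iff)
    also have "int (nat \<lfloor>y\<rfloor>) = \<lfloor>y\<rfloor>" using f0 by (rule nat_0_le)
    finally have "int n \<le> \<lfloor>y\<rfloor>" .
    hence "of_int (int n) \<le> y" by (rule le_floor_iff[THEN iffD1])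
    thus "real n \<le> y" by (simp only: of_int_of_nat_eq)
  qed
  show ?thesis
  proof (rule set_eqI)
    fix n
    show "n \<in> {n::nat. 1 \<le> n \<and> real n \<le> y} \<longleftrightarrow> n \<in> {1..nat \<lfloor>y\<rfloor>}"
      using eq[of n] by simp
  qed
qed

lemma fib_avg_eq:
  assumes p: "prime p" and y: "real N powr \<gamma> \<ge> 0"
  shows "fib_avg p N \<gamma> = (1 / real p) * (\<Sum>x<p. cmod (\<Sum>n\<in>{1..nat \<lfloor>real N powr \<gamma>\<rfloor>}. ee (real x * of_int (int (fib n)) / real p)))"
proof -
  have p0: "p > 0" using p prime_gt_0_nat by blast
  have s: "{0..p - 1} = {..<p}" using p0 by auto
  show ?thesis unfolding fib_avg_def index_set[OF y] s ee_def of_int_of_nat_eq by (rule refl)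
qed

lemma bad_primes:
  fixes K :: nat and P :: "nat set"
  assumes K: "K \<ge> 1" and P: "finite P" "\<And>p. p \<in> P \<Longrightarrow> prime p"
  shows "card {p\<in>P. Ecount K p > K^2} \<le> 2 * K^3"
proof -
  define Q where "Q = ({1..K} \<times> {1..K}) \<times> ({1..K} \<times> {1..K})"
  define R where "R p q = (gg (fst q) \<noteq> gg (snd q) \<and> int p dvd gg (fst q) - gg (snd q))" for p q
  have fQ: "finite Q" unfolding Q_def by simp
  have Ec: "Ecount K p = card {q\<in>Q. R p q}" for p unfolding Ecount_def Q_def R_def by simp
  have ggb: "0 \<le> gg ab \<and> gg ab \<le> 2 ^ (K+1)" if "ab \<in> {1..K} \<times> {1..K}" for ab
  proof -
    have "fib (fst ab) \<le> fib K" "fib (snd ab) \<le> fib K" using that by (auto intro: fib_mono)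
    moreover have "fib K \<le> 2 ^ K" by (rule fib_le_pow)
    ultimately have "fib (fst ab) + fib (snd ab) \<le> 2 ^ (K+1)" by simp
    hence "int (fib (fst ab) + fib (snd ab)) \<le> int (2 ^ (K+1))" by (simp only: of_nat_le_iff)
    thus ?thesis unfolding gg_def by simp
  qed
  have L: "card {p\<in>P. R p q} \<le> K + 1" if q: "q \<in> Q" for q
  proof (cases "gg (fst q) = gg (snd q)")
    case True
    hence "{p\<in>P. R p q} = {}" unfolding R_def by simp
    thus ?thesis by (simp only: card.empty)
  next
    case False
    define m where "m = gg (fst q) - gg (snd q)"
    have m0: "m \<noteq> 0" using False m_def by simp
    have qq: "fst q \<in> {1..K} \<times> {1..K}" "snd q \<in> {1..K} \<times> {1..K}" using q unfolding Q_def
      by (simp_all only: mem_Times_iff)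
    have b1: "0 \<le> gg (fst q)" "gg (fst q) \<le> 2 ^ (K+1)" using ggb[OF qq(1)] by simp_all
    have b2: "0 \<le> gg (snd q)" "gg (snd q) \<le> 2 ^ (K+1)" using ggb[OF qq(2)] by simp_all
    have "\<bar>m\<bar> \<le> 2 ^ (K+1)" unfolding m_def abs_le_iff using b1 b2 by linarith
    hence c: "card {p::nat. prime p \<and> int p dvd m} \<le> K + 1" by (rule card_prime_divisors[OF m0])
    have fin: "finite {p::nat. prime p \<and> int p dvd m}"
    proof (rule finite_subset[of _ "{..nat \<bar>m\<bar>}"])
      show "{p::nat. prime p \<and> int p dvd m} \<subseteq> {..nat \<bar>m\<bar>}"
      proof
        fix p assume "p \<in> {p::nat. prime p \<and> int p dvd m}"
        hence "int p dvd m" by simp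
        hence "int p \<le> \<bar>m\<bar>" using dvd_imp_le_int[OF m0] by fastforce
        thus "p \<in> {..nat \<bar>m\<bar>}" by simp
      qed
    qed simp
    have "{p\<in>P. R p q} \<subseteq> {p::nat. prime p \<and> int p dvd m}"
    proof
      fix p assume "p \<in> {p\<in>P. R p q}"
      hence "p \<in> P" "R p q" by simp_all
      thus "p \<in> {p::nat. prime p \<and> int p dvd m}" using P(2) unfolding R_def m_def by simp
    qed
    hence "card {p\<in>P. R p q} \<le> card {p::nat. prime p \<and> int p dvd m}" using fin by (rule card_mono[rotated])
    thus ?thesis using c by simp
  qed
  define B where "B = card {p\<in>P. card {q\<in>Q. R p q} > K^2}"
  have "B * K^2 \<le> card Q * (K + 1)"
    unfolding B_def by (rule bad_count[OF P(1) fQ L])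
  also have "card Q = K^2 * K^2" unfolding Q_def by (simp add: power2_eq_square)
  finally have "B * K^2 \<le> (K^2 * (K + 1)) * K^2" by (simp only: mult_ac)
  moreover have "K^2 > 0" using K by simp
  ultimately have "B \<le> K^2 * (K + 1)" by (simp only: mult_le_cancel2)
  also have "\<dots> \<le> K^2 * (2 * K)" using K by (intro mult_left_mono) auto
  also have "\<dots> = 2 * K^3" by (simp add: power2_eq_square power3_eq_cube)
  finally have "B \<le> 2 * K^3" .
  thus ?thesis unfolding B_def Ec .
qed



lemma per_N:
  fixes \<gamma> :: real and N :: nat
  assumes g: "0 < \<gamma>" and N: "N \<ge> 1"
  defines "Gs \<equiv> {p. prime p \<and> p \<le> N \<and>
          1/6 * real N powr (\<gamma>/2) \<le> fib_avg p N \<gamma> \<and>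
          fib_avg p N \<gamma> \<le> 2 * real N powr (\<gamma>/2)}"
  shows "card Gs \<le> card {p. prime p \<and> p \<le> N}"
    and "real (card {p. prime p \<and> p \<le> N}) - 2 * real N powr (3 * \<gamma>) \<le> real (card Gs)"
proof -
  define y where "y = real N powr \<gamma>"
  define K where "K = nat \<lfloor>y\<rfloor>"
  define P where "P = {p. prime p \<and> p \<le> N}"
  have fP: "finite P" unfolding P_def by simp
  have y1: "y \<ge> 1" unfolding y_def using N g by (intro ge_one_powr_ge_zero) auto
  have K1: "K \<ge> 1" unfolding K_def using y1 by linarith
  have Ky: "real K \<le> y" unfolding K_def using y1 by linarith
  have fl: "real K = of_int \<lfloor>y\<rfloor>" unfolding K_def using y1 by simp
  have f1: "of_int \<lfloor>y\<rfloor> \<ge> (1::real)" using y1 by simp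
  have f2: "y < of_int \<lfloor>y\<rfloor> + 1" using floor_correct[of y] by simp
  have Ky2: "y / 2 \<le> real K" using fl f1 f2 by linarith
  have GP: "Gs \<subseteq> P" unfolding Gs_def P_def by auto
  thus "card Gs \<le> card {p. prime p \<and> p \<le> N}" using fP unfolding P_def by (intro card_mono) auto
  define B where "B = {p\<in>P. Ecount K p > K^2}"
  have cB: "card B \<le> 2 * K^3" unfolding B_def by (rule bad_primes[OF K1 fP]) (simp add: P_def)
  have sq: "real N powr (\<gamma>/2) = sqrt y" unfolding y_def by (rule powr_half_sqrt_powr) simp
  have PGB: "P \<subseteq> Gs \<union> B"
  proof
    fix p assume pP: "p \<in> P"
    show "p \<in> Gs \<union> B"
    proof (cases "Ecount K p \<le> K^2")
      case False thus ?thesis using pP B_def by auto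
    next
      case True
      have pr: "prime p" using pP P_def by simp
      have fa: "fib_avg p N \<gamma> = (1 / real p) * (\<Sum>x<p. cmod (\<Sum>n\<in>{1..K}. ee (real x * of_int (int (fib n)) / real p)))"
        unfolding K_def y_def by (rule fib_avg_eq[OF pr]) simp
      have up: "fib_avg p N \<gamma> \<le> 2 * sqrt (real K)" unfolding fa by (rule per_prime(1)[OF pr K1 True])
      have lo: "sqrt (real K / 13) \<le> fib_avg p N \<gamma>" unfolding fa by (rule per_prime(2)[OF pr K1 True])
      have "2 * sqrt (real K) \<le> 2 * sqrt y" using Ky by simp
      hence u2: "fib_avg p N \<gamma> \<le> 2 * real N powr (\<gamma>/2)" using up sq by linarith
      have "sqrt y / 6 = sqrt (y / 36)" by (simp add: real_sqrt_divide)
      also have "\<dots> \<le> sqrt (real K / 13)" using Ky2 y1 by simp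
      finally have l2: "1/6 * real N powr (\<gamma>/2) \<le> fib_avg p N \<gamma>" using lo sq by simp
      show ?thesis using pP u2 l2 unfolding Gs_def P_def by simp
    qed
  qed
  have fG: "finite Gs" using GP fP finite_subset by blast
  have "card P \<le> card (Gs \<union> B)" using PGB fG fP B_def by (intro card_mono) auto
  also have "\<dots> \<le> card Gs + card B" by (rule card_Un_le)
  finally have "real (card P) \<le> real (card Gs) + real (card B)" by linarith
  moreover have "real (card B) \<le> 2 * real K ^ 3" using cB by (metis of_nat_le_iff of_nat_mult of_nat_numeral of_nat_power)
  moreover have "real K ^ 3 \<le> y ^ 3" using Ky by (intro power_mono) auto
  moreover have "y ^ 3 = real N powr (3 * \<gamma>)" unfolding y_def
    using N by (simp add: powr_realpow[symmetric] powr_powr mult.commute)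
  ultimately show "real (card {p. prime p \<and> p \<le> N}) - 2 * real N powr (3 * \<gamma>) \<le> real (card Gs)"
    unfolding P_def by linarith
qed



lemma ln_powr_lim: "(a::real) > 0 \<Longrightarrow> ((\<lambda>x::real. ln x / x powr a) \<longlongrightarrow> 0) at_top"
  by real_asymp

theorem theorem6:
  fixes \<gamma> :: real
  assumes "0 < \<gamma>" and "\<gamma> < 1/3"
  shows "\<exists>c1 c2 :: real. c1 > 0 \<and> c2 > 0 \<and>
    ((\<lambda>N::nat. real (card {p. prime p \<and> p \<le> N \<and>
          c1 * real N powr (\<gamma>/2) \<le> fib_avg p N \<gamma> \<and>
          fib_avg p N \<gamma> \<le> c2 * real N powr (\<gamma>/2)})
        / real (card {p::nat. prime p \<and> p \<le> N})) \<longlongrightarrow> 1) at_top"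
proof (intro exI conjI)
  show "(1/6::real) > 0" by simp
  show "(2::real) > 0" by simp
  define a where "a = 1 - 3 * \<gamma>"
  have a0: "a > 0" using assms a_def by simp
  define lo where "lo N = 1 - 12 * (ln (real N) / real N powr a)" for N :: nat
  define r where "r N = real (card {p. prime p \<and> p \<le> N \<and>
          1/6 * real N powr (\<gamma>/2) \<le> fib_avg p N \<gamma> \<and>
          fib_avg p N \<gamma> \<le> 2 * real N powr (\<gamma>/2)})
        / real (card {p::nat. prime p \<and> p \<le> N})" for N
  have l0: "((\<lambda>N::nat. ln (real N) / real N powr a) \<longlongrightarrow> 0) at_top"
    using filterlim_compose[OF ln_powr_lim[OF a0] filterlim_real_sequentially] by (simp add: o_def)
  have "(lo \<longlongrightarrow> 1 - 12 * 0) at_top" unfolding lo_def by (intro tendsto_intros l0)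
  hence lolim: "(lo \<longlongrightarrow> 1) at_top" by simp
  have ev: "eventually (\<lambda>N. lo N \<le> r N \<and> r N \<le> 1) at_top"
  proof (rule eventually_at_top_linorderI[of 2])
    fix N :: nat assume N2: "N \<ge> 2"
    define pi where "pi = real (card {p::nat. prime p \<and> p \<le> N})"
    define gN where "gN = real (card {p. prime p \<and> p \<le> N \<and>
          1/6 * real N powr (\<gamma>/2) \<le> fib_avg p N \<gamma> \<and>
          fib_avg p N \<gamma> \<le> 2 * real N powr (\<gamma>/2)})"
    have rr: "r N = gN / pi" unfolding r_def gN_def pi_def by simp
    have h1: "gN \<le> pi" unfolding gN_def pi_def using per_N(1)[OF assms(1), of N] N2 by simp
    have h2: "pi - 2 * real N powr (3 * \<gamma>) \<le> gN" unfolding gN_def pi_def using per_N(2)[OF assms(1), of N] N2 by simp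
    have lnN: "ln (real N) > 0" using N2 by simp
    have Npos: "real N > 0" using N2 by simp
    have hc: "real N / (6 * ln (real N)) \<le> pi" unfolding pi_def by (rule cheb[OF N2])
    have pipos: "pi > 0" using hc lnN Npos by (smt (verit) divide_pos_pos)
    have "2 * real N powr (3 * \<gamma>) / pi \<le> 2 * real N powr (3 * \<gamma>) / (real N / (6 * ln (real N)))"
    proof (rule divide_left_mono[OF hc])
      show "0 \<le> 2 * real N powr (3 * \<gamma>)" by simp
      have "0 < real N / (6 * ln (real N))" using lnN Npos by simp
      thus "0 < pi * (real N / (6 * ln (real N)))" using pipos by (rule mult_pos_pos[rotated])
    qed
    also have "\<dots> = 12 * (ln (real N) * (real N powr (3 * \<gamma>) / real N))" using lnN Npos by (simp add: field_simps)
    also have "real N powr (3 * \<gamma>) / real N = 1 / real N powr a"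
    proof -
      have "real N powr (3 * \<gamma>) / real N = real N powr (3 * \<gamma>) / real N powr 1" using Npos by simp
      also have "\<dots> = real N powr (3 * \<gamma> - 1)" by (simp add: powr_diff)
      also have "\<dots> = 1 / real N powr a" unfolding a_def using Npos
        by (simp add: powr_minus_divide[symmetric])
      finally show ?thesis .
    qed
    finally have q: "2 * real N powr (3 * \<gamma>) / pi \<le> 12 * (ln (real N) / real N powr a)" by simp
    have "1 - 2 * real N powr (3 * \<gamma>) / pi = (pi - 2 * real N powr (3 * \<gamma>)) / pi"
      using pipos by (simp add: diff_divide_distrib)
    also have "\<dots> \<le> gN / pi" using h2 pipos by (intro divide_right_mono) auto
    finally have "gN / pi \<ge> 1 - 2 * real N powr (3 * \<gamma>) / pi" .
    hence "lo N \<le> r N" using q rr unfolding lo_def by linarith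
    moreover have "r N \<le> 1" using rr h1 pipos by simp
    ultimately show "lo N \<le> r N \<and> r N \<le> 1" by simp
  qed
  have "(r \<longlongrightarrow> 1) at_top"
    by (rule tendsto_sandwich[OF eventually_mono[OF ev] eventually_mono[OF ev] lolim tendsto_const]) auto
  thus "((\<lambda>N::nat. real (card {p. prime p \<and> p \<le> N \<and>
          1/6 * real N powr (\<gamma>/2) \<le> fib_avg p N \<gamma> \<and>
          fib_avg p N \<gamma> \<le> 2 * real N powr (\<gamma>/2)})
        / real (card {p::nat. prime p \<and> p \<le> N})) \<longlongrightarrow> 1) at_top" unfolding r_def .
qed

end
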